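(* Let $G$ be a finite simple graph with maximum degree $d$, equipped with a rotation system, and let $L\ge 2$ be an even integer. Then $G$ has an $L$-localized edge coloring using at most $\min\{d,2L\}+1$ colors.
   Context: A rotation system of $G$ specifies, for each vertex $u$, a cyclic (clockwise) ordering of the edges incident to $u$. For an edge $e$ incident to $u$, if the clockwise cyclic ordering of edges at $u$ is $(l_1,\dots,l_k)$ with $e=l_i$, the $L$-neighborhood of $e$ around $u$ is the set of edges $l_{i-L/2},\dots,l_{i-1},l_{i+1},\dots,l_{i+L/2}$ (indices taken cyclically), i.e., the $L/2$ edges before and the $L/2$ edges after $e$ in the ordering, excluding $e$ itself. An $L$-localized edge coloring is an assignment of colors to the edges of $G$ such that for every edge $e=(u,v)$, no edge in the $L$-neighborhood of $e$ around $u$ and no edge in the $L$-neighborhood of $e$ around $v$ has the same color as $e$. *)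

theory Defs
  imports Main
begin

definition finite_simple_graph :: "'a set \<Rightarrow> 'a set set \<Rightarrow> bool" where
  "finite_simple_graph V E \<longleftrightarrow> finite V \<and> (\<forall>e\<in>E. e \<subseteq> V \<and> card e = 2)"

definition incident_edges :: "'a set set \<Rightarrow> 'a \<Rightarrow> 'a set set" where
  "incident_edges E v = {e \<in> E. v \<in> e}"

definition degree :: "'a set set \<Rightarrow> 'a \<Rightarrow> nat" where
  "degree E v = card (incident_edges E v)"

definition max_degree :: "'a set \<Rightarrow> 'a set set \<Rightarrow> nat" where
  "max_degree V E = Max ((degree E) ` V)"

text \<open>A rotation system: for each vertex u, a list enumerating (without repetition)
  the edges incident to u; the list is read cyclically (clockwise order).\<close>
definition rotation_system :: "'a set \<Rightarrow> 'a set set \<Rightarrow> ('a \<Rightarrow> 'a set list) \<Rightarrow> bool" where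
  "rotation_system V E rot \<longleftrightarrow>
     (\<forall>u\<in>V. distinct (rot u) \<and> set (rot u) = incident_edges E u)"

definition L_neighborhood :: "('a \<Rightarrow> 'a set list) \<Rightarrow> nat \<Rightarrow> 'a \<Rightarrow> 'a set \<Rightarrow> 'a set set" where
  "L_neighborhood rot L u e =
     {rot u ! nat ((int i + j) mod int (length (rot u))) | i j.
        i < length (rot u) \<and> rot u ! i = e \<and>
        j \<in> {- int (L div 2) .. int (L div 2)} \<and> j \<noteq> 0} - {e}"

definition L_localized_coloring ::
  "'a set set \<Rightarrow> ('a \<Rightarrow> 'a set list) \<Rightarrow> nat \<Rightarrow> ('a set \<Rightarrow> 'c) \<Rightarrow> bool" where
  "L_localized_coloring E rot L col \<longleftrightarrow>
     (\<forall>e\<in>E. \<forall>u\<in>e. \<forall>f\<in>L_neighborhood rot L u e. col f \<noteq> col e)"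

end

theory Submission
  imports Defs
begin

definition proper :: "'a set set \<Rightarrow> ('a set \<Rightarrow> nat) \<Rightarrow> bool" where
  "proper F c \<longleftrightarrow> (\<forall>f\<in>F. \<forall>g\<in>F. f \<noteq> g \<longrightarrow> f \<inter> g \<noteq> {} \<longrightarrow> c f \<noteq> c g)"

definition free :: "'a set set \<Rightarrow> ('a set \<Rightarrow> nat) \<Rightarrow> 'a \<Rightarrow> nat \<Rightarrow> bool" where
  "free F c z \<gamma> \<longleftrightarrow> (\<forall>g\<in>F. z \<in> g \<longrightarrow> c g \<noteq> \<gamma>)"

lemma proper_uniq:
  assumes "proper F c" "f \<in> F" "g \<in> F" "z \<in> f" "z \<in> g" "c f = c g"
  shows "f = g"
  using assms unfolding proper_def by blast

lemma card2_pair: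
  assumes "card f = 2" "z \<in> f"
  shows "\<exists>w. f = {z, w} \<and> w \<noteq> z"
proof -
  obtain a b where ab: "f = {a,b}" "a \<noteq> b" using assms(1) by (meson card_2_iff)
  then show ?thesis using assms(2) by auto
qed

lemma card2_neq:
  assumes "card {x, y} = 2" shows "x \<noteq> y"
  using assms by (cases "x = y") auto

lemma free_exists:
  assumes "finite F" "card {g\<in>F. z\<in>g} < k"
  shows "\<exists>\<gamma><k. free F c z \<gamma>"
proof -
  have fin: "finite {g\<in>F. z\<in>g}" using assms(1) by simp
  have "card (c ` {g\<in>F. z\<in>g}) \<le> card {g\<in>F. z\<in>g}"
    using fin by (rule card_image_le)
  then have lt: "card (c ` {g\<in>F. z\<in>g}) < card {0..<k}" using assms(2) by simp
  have "\<not> {0..<k} \<subseteq> c ` {g\<in>F. z\<in>g}"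
  proof
    assume "{0..<k} \<subseteq> c ` {g\<in>F. z\<in>g}"
    then have "card {0..<k} \<le> card (c ` {g\<in>F. z\<in>g})"
      using fin by (intro card_mono) auto
    then show False using lt by simp
  qed
  then obtain \<gamma> where "\<gamma> \<in> {0..<k}" "\<gamma> \<notin> c ` {g\<in>F. z\<in>g}" by blast
  then show ?thesis unfolding free_def by auto
qed

lemma shift:
  fixes y :: "nat \<Rightarrow> 'a" and i k :: nat
  assumes G2: "\<forall>f\<in>insert {x, y 0} F. card f = 2"
  and pr: "proper F c" and bd: "\<forall>f\<in>F. c f < k"
  and e: "{x, y 0} \<notin> F"
  and fe: "\<forall>l\<in>{1..i}. {x, y l} \<in> F"
  and inj: "inj_on y {0..i}"
  and fc: "\<forall>l\<in>{1..i}. free F c (y (l-1)) (c {x, y l})"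
  and gx: "free F c x \<gamma>" and gy: "free F c (y i) \<gamma>" and gk: "\<gamma> < k"
  shows "\<exists>c'. proper (insert {x, y 0} F) c' \<and> (\<forall>f\<in>insert {x, y 0} F. c' f < k)"
proof -
  have feF: "{x, y l} \<in> F" if "1 \<le> l" "l \<le> i" for l using fe that by auto
  have yx: "y l \<noteq> x" if "l \<le> i" for l
  proof (cases "l = 0")
    case True then show ?thesis using G2 card2_neq[of x "y 0"] by auto
  next
    case False
    then have "{x, y l} \<in> F" using feF[of l] that by (metis One_nat_def Suc_leI neq0_conv)
    then have "card {x, y l} = 2" using G2 by blast
    then show ?thesis using card2_neq by metis
  qed
  have eqv: "l = l'" if "l \<le> i" "l' \<le> i" "{x, y l} = {x, y l'}" for l l'
  proof -
    have "y l = y l'" using that yx[of l] yx[of l'] by (metis doubleton_eq_iff)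
    then show ?thesis using inj that unfolding inj_on_def by (meson atLeastAtMost_iff zero_le)
  qed
  define FE where "FE = {{x, y l} | l. l \<le> i}"
  define c' where "c' f = (if \<exists>l<i. f = {x, y l} then c {x, y (Suc (SOME l. l < i \<and> f = {x, y l}))}
      else if f = {x, y i} then \<gamma> else c f)" for f
  have c1: "c' {x, y l} = c {x, y (Suc l)}" if "l < i" for l
  proof -
    have ex: "\<exists>l'. l' < i \<and> {x, y l} = {x, y l'}" using that by blast
    have "(SOME l'. l' < i \<and> {x, y l} = {x, y l'}) = l"
    proof (rule some_equality)
      show "l < i \<and> {x, y l} = {x, y l}" using that by simp
      fix l' assume "l' < i \<and> {x, y l} = {x, y l'}"
      then show "l' = l" using eqv[of l l'] that by auto
    qed
    then show ?thesis unfolding c'_def using that by auto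
  qed
  have c2: "c' {x, y i} = \<gamma>"
  proof -
    have "\<not> (\<exists>l<i. {x, y i} = {x, y l})" using eqv[of i] by (metis less_imp_le_nat less_irrefl order_refl)
    then show ?thesis unfolding c'_def by auto
  qed
  have c3: "c' f = c f" if "f \<notin> FE" for f
  proof -
    have "\<not> (\<exists>l<i. f = {x, y l})" "f \<noteq> {x, y i}" using that unfolding FE_def by auto
    then show ?thesis unfolding c'_def by auto
  qed
  have cval: "c' {x, y l} \<noteq> c {x, y l'}" if "l \<le> i" "1 \<le> l'" "l' \<le> i" "l' \<noteq> Suc l" for l l'
  proof (cases "l < i")
    case True
    have "{x, y (Suc l)} \<noteq> {x, y l'}" using eqv[of "Suc l" l'] that True by auto
    then have "c {x, y (Suc l)} \<noteq> c {x, y l'}"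
      using proper_uniq[OF pr feF[of "Suc l"] feF[of l'], of x] that True by auto
    then show ?thesis using c1 True by simp
  next
    case False
    then have "l = i" using that by simp
    then show ?thesis using c2 gx feF[of l'] that unfolding free_def by auto
  qed
  have key: "c' {x, y l} \<noteq> c' g"
    if l: "l \<le> i" and g: "g \<in> insert {x, y 0} F" "g \<noteq> {x, y l}" "{x, y l} \<inter> g \<noteq> {}" for l g
  proof (cases "g \<in> FE")
    case True
    then obtain l' where l': "l' \<le> i" "g = {x, y l'}" unfolding FE_def by auto
    have "l' \<noteq> l" using g l' by auto
    show ?thesis
    proof (cases "l' < i")
      case True
      then have "c' g = c {x, y (Suc l')}" using c1 l' by simp
      then show ?thesis using cval[of l "Suc l'"] l True \<open>l' \<noteq> l\<close> by auto
    next
      case False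
      then have "l' = i" "l < i" using l' \<open>l' \<noteq> l\<close> l by auto
      then have "c' g = \<gamma>" "c' {x, y l} = c {x, y (Suc l)}" using c1 c2 l' by auto
      then show ?thesis using gx feF[of "Suc l"] \<open>l < i\<close> unfolding free_def by auto
    qed
  next
    case False
    have "{x, y 0} \<in> FE" unfolding FE_def by auto
    then have gF: "g \<in> F" using g False by auto
    have cg: "c' g = c g" using c3 False by simp
    have "x \<in> g \<or> y l \<in> g" using g by auto
    then show ?thesis
    proof
      assume xg: "x \<in> g"
      show ?thesis
      proof (cases "l < i")
        case True
        have "{x, y (Suc l)} \<noteq> g" using False unfolding FE_def using True by auto
        then have "c {x, y (Suc l)} \<noteq> c g"
          using proper_uniq[OF pr feF[of "Suc l"] gF, of x] True xg by auto
        then show ?thesis using c1 True cg by simp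
      next
        case False
        then have "l = i" using l by simp
        then show ?thesis using c2 gx gF xg cg unfolding free_def by auto
      qed
    next
      assume yg: "y l \<in> g"
      show ?thesis
      proof (cases "l < i")
        case True
        have "free F c (y l) (c {x, y (Suc l)})" using fc True by force
        then show ?thesis using c1 True cg gF yg unfolding free_def by auto
      next
        case False
        then have "l = i" using l by simp
        then show ?thesis using c2 gy gF yg cg unfolding free_def by auto
      qed
    qed
  qed
  have "proper (insert {x, y 0} F) c'"
    unfolding proper_def
  proof (intro ballI impI)
    fix f g assume f: "f \<in> insert {x, y 0} F" and g: "g \<in> insert {x, y 0} F"
      and ne: "f \<noteq> g" and int: "f \<inter> g \<noteq> {}"
    show "c' f \<noteq> c' g"
    proof (cases "f \<in> FE")
      case True
      then obtain l where "l \<le> i" "f = {x, y l}" unfolding FE_def by auto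
      then show ?thesis using key[of l g] g ne int by auto
    next
      case fF: False
      show ?thesis
      proof (cases "g \<in> FE")
        case True
        then obtain l where "l \<le> i" "g = {x, y l}" unfolding FE_def by auto
        then show ?thesis using key[of l f] f ne int by (auto simp: Int_commute)
      next
        case False
        have "{x, y 0} \<in> FE" unfolding FE_def by auto
        then have "f \<in> F" "g \<in> F" using f g fF False by auto
        then show ?thesis using c3 fF False pr ne int unfolding proper_def by auto
      qed
    qed
  qed
  moreover have "\<forall>f\<in>insert {x, y 0} F. c' f < k"
  proof
    fix f assume f: "f \<in> insert {x, y 0} F"
    show "c' f < k"
    proof (cases "f \<in> FE")
      case True
      then obtain l where l: "l \<le> i" "f = {x, y l}" unfolding FE_def by auto
      show ?thesis
      proof (cases "l < i")
        case True then show ?thesis using c1 l bd feF[of "Suc l"] by auto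
      next
        case False then show ?thesis using c2 l gk by auto
      qed
    next
      case False
      have "{x, y 0} \<in> FE" unfolding FE_def by auto
      then show ?thesis using False f c3 bd by auto
    qed
  qed
  ultimately show ?thesis by blast
qed

definition hasnext :: "'a set set \<Rightarrow> ('a set \<Rightarrow> nat) \<Rightarrow> nat \<Rightarrow> 'a \<Rightarrow> bool" where
  "hasnext F c \<gamma> z \<longleftrightarrow> (\<exists>w. {z, w} \<in> F \<and> c {z, w} = \<gamma>)"

definition colw :: "nat \<Rightarrow> nat \<Rightarrow> nat \<Rightarrow> nat" where
  "colw \<alpha> \<beta> i = (if even i then \<beta> else \<alpha>)"

primrec walk :: "'a set set \<Rightarrow> ('a set \<Rightarrow> nat) \<Rightarrow> nat \<Rightarrow> nat \<Rightarrow> 'a \<Rightarrow> nat \<Rightarrow> 'a" where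
  "walk F c \<alpha> \<beta> x 0 = x"
| "walk F c \<alpha> \<beta> x (Suc i) = (if hasnext F c (colw \<alpha> \<beta> i) (walk F c \<alpha> \<beta> x i)
      then (SOME w. {walk F c \<alpha> \<beta> x i, w} \<in> F \<and> c {walk F c \<alpha> \<beta> x i, w} = colw \<alpha> \<beta> i)
      else walk F c \<alpha> \<beta> x i)"

definition reached :: "'a set set \<Rightarrow> ('a set \<Rightarrow> nat) \<Rightarrow> nat \<Rightarrow> nat \<Rightarrow> 'a \<Rightarrow> nat \<Rightarrow> bool" where
  "reached F c \<alpha> \<beta> x l \<longleftrightarrow> (\<forall>l'<l. hasnext F c (colw \<alpha> \<beta> l') (walk F c \<alpha> \<beta> x l'))"

definition wset :: "'a set set \<Rightarrow> ('a set \<Rightarrow> nat) \<Rightarrow> nat \<Rightarrow> nat \<Rightarrow> 'a \<Rightarrow> 'a set set" where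
  "wset F c \<alpha> \<beta> x = {{walk F c \<alpha> \<beta> x i, walk F c \<alpha> \<beta> x (Suc i)} | i. reached F c \<alpha> \<beta> x (Suc i)}"

definition swc :: "'a set set \<Rightarrow> ('a set \<Rightarrow> nat) \<Rightarrow> nat \<Rightarrow> nat \<Rightarrow> 'a \<Rightarrow> 'a set \<Rightarrow> nat" where
  "swc F c \<alpha> \<beta> x f = (if f \<in> wset F c \<alpha> \<beta> x then (if c f = \<alpha> then \<beta> else \<alpha>) else c f)"

context
  fixes F :: "'a set set" and c :: "'a set \<Rightarrow> nat" and \<alpha> \<beta> :: nat and x :: 'a
  assumes G2: "\<forall>f\<in>F. card f = 2" and pr: "proper F c" and ab: "\<alpha> \<noteq> \<beta>" and ax: "free F c x \<alpha>"
begin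

lemma W1:
  assumes "reached F c \<alpha> \<beta> x (Suc i)"
  shows "{walk F c \<alpha> \<beta> x i, walk F c \<alpha> \<beta> x (Suc i)} \<in> F \<and>
         c {walk F c \<alpha> \<beta> x i, walk F c \<alpha> \<beta> x (Suc i)} = colw \<alpha> \<beta> i"
proof -
  have h: "hasnext F c (colw \<alpha> \<beta> i) (walk F c \<alpha> \<beta> x i)" using assms unfolding reached_def by auto
  then have "\<exists>w. {walk F c \<alpha> \<beta> x i, w} \<in> F \<and> c {walk F c \<alpha> \<beta> x i, w} = colw \<alpha> \<beta> i"
    unfolding hasnext_def by auto
  from someI_ex[OF this] show ?thesis using h by simp
qed

lemma reached_mono: "reached F c \<alpha> \<beta> x l \<Longrightarrow> l' \<le> l \<Longrightarrow> reached F c \<alpha> \<beta> x l'"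
  unfolding reached_def by auto

lemma colw_ab: "colw \<alpha> \<beta> i = \<alpha> \<or> colw \<alpha> \<beta> i = \<beta>"
  unfolding colw_def by auto

lemma colw_Suc: "colw \<alpha> \<beta> (Suc i) \<noteq> colw \<alpha> \<beta> i"
  unfolding colw_def using ab by auto

lemma W2:
  assumes r: "reached F c \<alpha> \<beta> x l" and g: "g \<in> F" "walk F c \<alpha> \<beta> x l \<in> g"
    and cg: "c g = \<alpha> \<or> c g = \<beta>"
  shows "g \<in> wset F c \<alpha> \<beta> x"
proof -
  have "card g = 2" using G2 g(1) by blast
  then obtain w where gw: "g = {walk F c \<alpha> \<beta> x l, w}" using card2_pair[OF _ g(2)] by blast
  show ?thesis
  proof (cases "c g = colw \<alpha> \<beta> l")
    case True
    then have hn: "hasnext F c (colw \<alpha> \<beta> l) (walk F c \<alpha> \<beta> x l)"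
      unfolding hasnext_def using gw g by auto
    have r1: "reached F c \<alpha> \<beta> x (Suc l)"
      unfolding reached_def
    proof (intro allI impI)
      fix l' assume "l' < Suc l"
      then show "hasnext F c (colw \<alpha> \<beta> l') (walk F c \<alpha> \<beta> x l')"
        using r hn unfolding reached_def by (cases "l' = l") auto
    qed
    note e = W1[OF r1]
    have "g = {walk F c \<alpha> \<beta> x l, walk F c \<alpha> \<beta> x (Suc l)}"
      by (rule proper_uniq[OF pr g(1) conjunct1[OF e] g(2)]) (use e True in simp_all)
    then show ?thesis unfolding wset_def using r1 by blast
  next
    case False
    show ?thesis
    proof (cases l)
      case 0
      then have "c g = \<alpha>" using False cg unfolding colw_def by auto
      then show ?thesis using ax g 0 unfolding free_def by auto
    next
      case (Suc l')
      have "c g = colw \<alpha> \<beta> l'" using False cg Suc ab unfolding colw_def by auto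
      note e = W1[OF r[unfolded Suc]]
      have "g = {walk F c \<alpha> \<beta> x l', walk F c \<alpha> \<beta> x (Suc l')}"
        by (rule proper_uniq[OF pr g(1) conjunct1[OF e] g(2)]) (use e \<open>c g = colw \<alpha> \<beta> l'\<close> Suc in simp_all)
      then show ?thesis unfolding wset_def using r Suc by blast
    qed
  qed
qed

lemma W3:
  assumes "z \<in> \<Union>(wset F c \<alpha> \<beta> x)"
  shows "\<exists>l. reached F c \<alpha> \<beta> x l \<and> z = walk F c \<alpha> \<beta> x l"
proof -
  obtain i where i: "reached F c \<alpha> \<beta> x (Suc i)"
    "z \<in> {walk F c \<alpha> \<beta> x i, walk F c \<alpha> \<beta> x (Suc i)}"
    using assms unfolding wset_def by blast
  then show ?thesis using reached_mono[OF i(1), of i] by auto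
qed

lemma Wmem:
  assumes "g \<in> wset F c \<alpha> \<beta> x"
  shows "g \<in> F \<and> (c g = \<alpha> \<or> c g = \<beta>)"
proof -
  obtain i where i: "reached F c \<alpha> \<beta> x (Suc i)" "g = {walk F c \<alpha> \<beta> x i, walk F c \<alpha> \<beta> x (Suc i)}"
    using assms unfolding wset_def by blast
  then show ?thesis using W1[OF i(1)] colw_ab[of i] by simp
qed

lemma S1: "proper F (swc F c \<alpha> \<beta> x)"
  unfolding proper_def
proof (intro ballI impI)
  fix f g assume f: "f \<in> F" and g: "g \<in> F" and ne: "f \<noteq> g" and int: "f \<inter> g \<noteq> {}"
  have cfg: "c f \<noteq> c g" using pr f g ne int unfolding proper_def by auto
  obtain z where z: "z \<in> f" "z \<in> g" using int by auto
  show "swc F c \<alpha> \<beta> x f \<noteq> swc F c \<alpha> \<beta> x g"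
  proof (cases "f \<in> wset F c \<alpha> \<beta> x")
    case fw: True
    show ?thesis
    proof (cases "g \<in> wset F c \<alpha> \<beta> x")
      case True
      then show ?thesis using fw cfg Wmem[OF fw] Wmem[OF True] ab unfolding swc_def by auto
    next
      case False
      obtain l where l: "reached F c \<alpha> \<beta> x l" "z = walk F c \<alpha> \<beta> x l" using W3 fw z by blast
      have "\<not> (c g = \<alpha> \<or> c g = \<beta>)" using W2[OF l(1) g] l z False by auto
      then show ?thesis using fw False Wmem[OF fw] unfolding swc_def by auto
    qed
  next
    case fw: False
    show ?thesis
    proof (cases "g \<in> wset F c \<alpha> \<beta> x")
      case True
      obtain l where l: "reached F c \<alpha> \<beta> x l" "z = walk F c \<alpha> \<beta> x l" using W3 True z by blast
      have "\<not> (c f = \<alpha> \<or> c f = \<beta>)" using W2[OF l(1) f] l z fw by auto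
      then show ?thesis using fw True Wmem[OF True] unfolding swc_def by auto
    next
      case False
      then show ?thesis using fw cfg unfolding swc_def by auto
    qed
  qed
qed

lemma S2:
  assumes "z \<notin> \<Union>(wset F c \<alpha> \<beta> x)"
  shows "free F (swc F c \<alpha> \<beta> x) z \<gamma> \<longleftrightarrow> free F c z \<gamma>"
proof -
  have "\<And>g. g \<in> F \<Longrightarrow> z \<in> g \<Longrightarrow> swc F c \<alpha> \<beta> x g = c g"
    using assms unfolding swc_def by auto
  then show ?thesis unfolding free_def by auto
qed

lemma S3:
  assumes "\<gamma> \<noteq> \<alpha>" "\<gamma> \<noteq> \<beta>"
  shows "free F (swc F c \<alpha> \<beta> x) z \<gamma> \<longleftrightarrow> free F c z \<gamma>"
proof -
  have "\<And>g. g \<in> F \<Longrightarrow> swc F c \<alpha> \<beta> x g = \<gamma> \<longleftrightarrow> c g = \<gamma>"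
    using assms Wmem unfolding swc_def by auto
  then show ?thesis unfolding free_def by auto
qed

lemma S4:
  assumes r: "reached F c \<alpha> \<beta> x l" and fb: "free F c (walk F c \<alpha> \<beta> x l) \<beta>"
  shows "free F (swc F c \<alpha> \<beta> x) (walk F c \<alpha> \<beta> x l) \<alpha>"
  unfolding free_def
proof (intro ballI impI)
  fix g assume g: "g \<in> F" "walk F c \<alpha> \<beta> x l \<in> g"
  show "swc F c \<alpha> \<beta> x g \<noteq> \<alpha>"
  proof (cases "g \<in> wset F c \<alpha> \<beta> x")
    case True
    then show ?thesis using Wmem[OF True] fb g ab unfolding swc_def free_def by auto
  next
    case False
    then show ?thesis using W2[OF r g] unfolding swc_def by auto
  qed
qed

lemma S4':
  assumes r: "reached F c \<alpha> \<beta> x l" and fa: "free F c (walk F c \<alpha> \<beta> x l) \<alpha>"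
  shows "free F (swc F c \<alpha> \<beta> x) (walk F c \<alpha> \<beta> x l) \<beta>"
  unfolding free_def
proof (intro ballI impI)
  fix g assume g: "g \<in> F" "walk F c \<alpha> \<beta> x l \<in> g"
  show "swc F c \<alpha> \<beta> x g \<noteq> \<beta>"
  proof (cases "g \<in> wset F c \<alpha> \<beta> x")
    case True
    then show ?thesis using Wmem[OF True] fa g ab unfolding swc_def free_def by auto
  next
    case False
    then show ?thesis using W2[OF r g] unfolding swc_def by auto
  qed
qed

lemma S5:
  assumes r: "reached F c \<alpha> \<beta> x a" and a0: "a \<noteq> 0" and fb: "free F c (walk F c \<alpha> \<beta> x a) \<beta>"
  shows "\<not> hasnext F c (colw \<alpha> \<beta> a) (walk F c \<alpha> \<beta> x a)"
proof -
  obtain a' where a': "a = Suc a'" using a0 by (cases a) auto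
  note e = W1[OF r[unfolded a']]
  have "colw \<alpha> \<beta> a' \<noteq> \<beta>" using e fb a' unfolding free_def by auto
  then have "colw \<alpha> \<beta> a = \<beta>" using a' unfolding colw_def by auto
  then show ?thesis using fb unfolding hasnext_def free_def by auto
qed

lemma S6:
  assumes "reached F c \<alpha> \<beta> x a" "reached F c \<alpha> \<beta> x b"
    "\<not> hasnext F c (colw \<alpha> \<beta> a) (walk F c \<alpha> \<beta> x a)"
    "\<not> hasnext F c (colw \<alpha> \<beta> b) (walk F c \<alpha> \<beta> x b)"
  shows "a = b"
  using assms unfolding reached_def by (cases a b rule: linorder_cases) auto

lemma S7:
  assumes "\<forall>f\<in>F. c f < k" "\<alpha> < k" "\<beta> < k"
  shows "\<forall>f\<in>F. swc F c \<alpha> \<beta> x f < k"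
  using assms unfolding swc_def by auto

lemma S8: "f \<notin> wset F c \<alpha> \<beta> x \<Longrightarrow> swc F c \<alpha> \<beta> x f = c f"
  unfolding swc_def by auto

lemma S9: "f \<in> wset F c \<alpha> \<beta> x \<Longrightarrow> c f = \<beta> \<Longrightarrow> swc F c \<alpha> \<beta> x f = \<alpha>"
  unfolding swc_def using ab by auto

lemma reached0: "reached F c \<alpha> \<beta> x 0"
  unfolding reached_def by auto

end

lemma extend:
  fixes F :: "'a set set" and e :: "'a set" and c :: "'a set \<Rightarrow> nat" and k :: nat
  assumes fin: "finite F" and G2: "\<forall>f\<in>insert e F. card f = 2" and eF: "e \<notin> F"
    and pr: "proper F c" and bd: "\<forall>f\<in>F. c f < k"
    and deg: "\<forall>z. card {g \<in> insert e F. z \<in> g} < k"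
  shows "\<exists>c'. proper (insert e F) c' \<and> (\<forall>f\<in>insert e F. c' f < k)"
proof -
  have G2F: "\<forall>f\<in>F. card f = 2" using G2 by auto
  obtain x y0 where e: "e = {x, y0}" "x \<noteq> y0" using G2 by (meson card_2_iff insertI1)
  define isfan where "isfan n y \<longleftrightarrow> y 0 = y0 \<and> (\<forall>l\<in>{1..n}. {x, y l} \<in> F) \<and> inj_on y {0..n}
     \<and> (\<forall>l\<in>{1..n}. free F c (y (l-1)) (c {x, y l}))" for n and y :: "nat \<Rightarrow> 'a"
  define NB where "NB = {z. {x, z} \<in> F}"
  have "NB \<subseteq> \<Union>F" unfolding NB_def by auto
  moreover have "finite (\<Union>F)" using fin G2F by (metis card.infinite finite_Union zero_neq_numeral)
  ultimately have finNB: "finite NB" by (rule finite_subset)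
  have bound: "n \<le> card NB" if "isfan n y" for n y
  proof -
    have "inj_on y {1..n}" using that unfolding isfan_def by (auto intro: inj_on_subset)
    moreover have "y ` {1..n} \<subseteq> NB" using that unfolding isfan_def NB_def by auto
    ultimately have "card {1..n} \<le> card NB" using finNB by (rule card_inj_on_le)
    then show ?thesis by simp
  qed
  define N where "N = {n. \<exists>y. isfan n y}"
  have "isfan 0 (\<lambda>_. y0)" unfolding isfan_def by auto
  then have N0: "0 \<in> N" unfolding N_def by auto
  have finN: "finite N"
  proof (rule finite_subset)
    show "N \<subseteq> {..card NB}" unfolding N_def using bound by auto
  qed auto
  define n where "n = Max N"
  have "n \<in> N" unfolding n_def using finN N0 by (intro Max_in) auto
  then obtain y where fan: "isfan n y" unfolding N_def by auto
  have y0: "y 0 = y0" and feF: "\<And>l. 1 \<le> l \<Longrightarrow> l \<le> n \<Longrightarrow> {x, y l} \<in> F"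
    and inj: "inj_on y {0..n}" and fc: "\<And>l. 1 \<le> l \<Longrightarrow> l \<le> n \<Longrightarrow> free F c (y (l-1)) (c {x, y l})"
    using fan unfolding isfan_def by auto
  have maximal: False if z: "{x, z} \<in> F" "z \<notin> y ` {0..n}" "free F c (y n) (c {x, z})" for z
  proof -
    define y' where "y' = y(Suc n := z)"
    have y'l: "y' l = y l" if "l \<le> n" for l using that unfolding y'_def by auto
    have "isfan (Suc n) y'"
      unfolding isfan_def
    proof (intro conjI ballI)
      show "y' 0 = y0" using y'l[of 0] y0 by simp
    next
      fix l assume "l \<in> {1..Suc n}"
      then show "{x, y' l} \<in> F" using feF y'l z unfolding y'_def by (cases "l = Suc n") auto
    next
      have "inj_on y' {0..n}" using inj y'l by (metis atLeastAtMost_iff inj_on_cong)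
      moreover have "y' (Suc n) \<notin> y' ` {0..n}" using z y'l unfolding y'_def by auto
      ultimately have "inj_on y' (insert (Suc n) {0..n})" by simp
      moreover have "insert (Suc n) {0..n} = {0..Suc n}" by auto
      ultimately show "inj_on y' {0..Suc n}" by simp
    next
      fix l assume l: "l \<in> {1..Suc n}"
      show "free F c (y' (l - 1)) (c {x, y' l})"
      proof (cases "l = Suc n")
        case True
        then show ?thesis using z y'l[of n] unfolding y'_def by simp
      next
        case False
        then have "l \<le> n" using l by simp
        then show ?thesis using fc[of l] l y'l[of l] y'l[of "l-1"] by simp
      qed
    qed
    then have "Suc n \<in> N" unfolding N_def by auto
    then have "Suc n \<le> n" unfolding n_def using Max_ge[OF finN] by blast
    then show False by simp
  qed
  have degF: "card {g \<in> F. z \<in> g} < k" for z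
  proof -
    have "card {g \<in> F. z \<in> g} \<le> card {g \<in> insert e F. z \<in> g}"
      using fin by (intro card_mono) auto
    then show ?thesis using deg by (meson le_less_trans)
  qed
  obtain \<alpha> where \<alpha>: "\<alpha> < k" "free F c x \<alpha>" using free_exists[OF fin degF] by blast
  obtain \<beta> where \<beta>: "\<beta> < k" "free F c (y n) \<beta>" using free_exists[OF fin degF] by blast
  have eq: "insert e F = insert {x, y 0} F" using e y0 by simp
  have G2': "\<forall>f\<in>insert {x, y 0} F. card f = 2" using G2 eq by simp
  have eF': "{x, y 0} \<notin> F" using eF e y0 by simp
  have fe': "\<forall>l\<in>{1..i}. {x, y l} \<in> F" if "i \<le> n" for i using feF that by auto
  have inj': "inj_on y {0..i}" if "i \<le> n" for i using inj that by (auto intro: inj_on_subset)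
  show ?thesis
  proof (cases "free F c x \<beta>")
    case True
    have "\<forall>l\<in>{1..n}. free F c (y (l-1)) (c {x, y l})" using fc by auto
    from shift[OF G2' pr bd eF' fe'[OF order_refl] inj'[OF order_refl] this True \<beta>(2) \<beta>(1)]
    show ?thesis using eq by simp
  next
    case False
    then obtain g where g: "g \<in> F" "x \<in> g" "c g = \<beta>" unfolding free_def by auto
    obtain z where gz: "g = {x, z}" using card2_pair[of g x] G2F g by blast
    have "z \<in> y ` {0..n}" using maximal[of z] g gz \<beta>(2) by auto
    then obtain j where j: "j \<le> n" "z = y j" by auto
    have "j \<noteq> 0"
    proof
      assume "j = 0"
      then have "g = {x, y 0}" using j gz by simp
      then show False using g(1) eF' by simp
    qed
    then obtain j' where j': "j = Suc j'" by (cases j) auto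
    have ab: "\<alpha> \<noteq> \<beta>" using \<alpha>(2) g unfolding free_def by auto
    have yx: "y l \<noteq> x" if "l \<le> n" for l
    proof (cases "l = 0")
      case True then show ?thesis using e y0 by auto
    next
      case False
      then have "{x, y l} \<in> F" using feF[of l] that by simp
      then have "card {x, y l} = 2" using G2F by blast
      then show ?thesis using card2_neq by metis
    qed
    have cxj: "c {x, y j} = \<beta>" using g gz j by simp
    have xyjF: "{x, y j} \<in> F" using g gz j by simp
    have fbj: "free F c (y j') \<beta>" using fc[of j] j j' cxj by simp
    define W where "W = wset F c \<alpha> \<beta> x"
    define c' where "c' = swc F c \<alpha> \<beta> x"
    note ctx = G2F pr ab \<alpha>(2)
    have pr': "proper F c'" unfolding c'_def using S1[OF ctx] .
    have bd': "\<forall>f\<in>F. c' f < k" unfolding c'_def using S7[OF ctx bd \<alpha>(1) \<beta>(1)] .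
    have w0: "walk F c \<alpha> \<beta> x 0 = x" by simp
    have xb: "free F c' x \<beta>" unfolding c'_def using S4'[OF ctx reached0[OF ctx], of] \<alpha>(2) w0 by simp
    have other: "free F c' (y (l-1)) (c' {x, y l})" if l: "1 \<le> l" "l \<le> n" "l \<noteq> j" for l
    proof -
      have lF: "{x, y l} \<in> F" using feF l by simp
      have na: "c {x, y l} \<noteq> \<alpha>" using \<alpha>(2) lF unfolding free_def by auto
      have "{x, y l} \<noteq> {x, y j}"
      proof
        assume "{x, y l} = {x, y j}"
        then have "y l = y j" using yx[of l] yx[of j] l j by (metis doubleton_eq_iff)
        then show False using inj l j unfolding inj_on_def by auto
      qed
      then have nb: "c {x, y l} \<noteq> \<beta>" using proper_uniq[OF pr lF xyjF, of x] cxj by auto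
      have "{x, y l} \<notin> W" using Wmem[OF ctx, of "{x, y l}"] na nb unfolding W_def by auto
      then have "c' {x, y l} = c {x, y l}" unfolding c'_def W_def using S8[OF ctx] by simp
      moreover have "free F c (y (l-1)) (c {x, y l})" using fc l by simp
      ultimately show ?thesis unfolding c'_def using S3[OF ctx na nb] by simp
    qed
    show ?thesis
    proof (cases "y j' \<in> \<Union>W")
      case False
      have "\<forall>l\<in>{1..j'}. free F c' (y (l-1)) (c' {x, y l})" using other j j' by auto
      moreover have "free F c' (y j') \<beta>"
        unfolding c'_def using S2[OF ctx, of "y j'" \<beta>] False fbj unfolding W_def by simp
      moreover have "j' \<le> n" using j j' by simp
      ultimately show ?thesis
        using shift[OF G2' pr' bd' eF' fe'[of j'] inj'[of j'], of \<beta>] xb \<beta>(1) eq by simp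
    next
      case True
      obtain a where a: "reached F c \<alpha> \<beta> x a" "y j' = walk F c \<alpha> \<beta> x a"
        using W3[OF ctx True[unfolded W_def]] by blast
      have a0: "a \<noteq> 0"
      proof
        assume "a = 0"
        then show False using a yx[of j'] j j' w0 by simp
      qed
      have sa: "\<not> hasnext F c (colw \<alpha> \<beta> a) (walk F c \<alpha> \<beta> x a)" using S5[OF ctx a(1) a0] a fbj by simp
      have ynW: "y n \<notin> \<Union>W"
      proof
        assume "y n \<in> \<Union>W"
        then obtain b where b: "reached F c \<alpha> \<beta> x b" "y n = walk F c \<alpha> \<beta> x b"
          using W3[OF ctx] unfolding W_def by blast
        have b0: "b \<noteq> 0"
        proof
          assume "b = 0"
          then show False using b yx[of n] w0 by simp
        qed
        have sb: "\<not> hasnext F c (colw \<alpha> \<beta> b) (walk F c \<alpha> \<beta> x b)" using S5[OF ctx b(1) b0] b \<beta>(2) by simp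
        have "a = b" using S6[OF ctx a(1) b(1) sa sb] .
        then have "y j' = y n" using a b by simp
        then have "j' = n" using inj j j' unfolding inj_on_def by auto
        then show False using j j' by simp
      qed
      have "{x, y j} \<in> W" unfolding W_def using W2[OF ctx reached0[OF ctx] xyjF] cxj by simp
      then have cj: "c' {x, y j} = \<alpha>" unfolding c'_def W_def using S9[OF ctx] cxj by simp
      have "free F c' (y j') \<alpha>" unfolding c'_def using S4[OF ctx a(1)] a fbj by simp
      then have fcj: "free F c' (y (j-1)) (c' {x, y j})" using cj j' by simp
      have "\<forall>l\<in>{1..n}. free F c' (y (l-1)) (c' {x, y l})"
        using other fcj by (metis atLeastAtMost_iff)
      moreover have "free F c' (y n) \<beta>"
        unfolding c'_def using S2[OF ctx, of "y n" \<beta>] ynW \<beta>(2) unfolding W_def by simp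
      ultimately show ?thesis
        using shift[OF G2' pr' bd' eF' fe'[OF order_refl] inj'[OF order_refl], of \<beta>] xb \<beta>(1) eq by simp
    qed
  qed
qed

lemma vizing:
  fixes E :: "'a set set"
  assumes "finite E" "\<forall>f\<in>E. card f = 2" "\<forall>z. card {g \<in> E. z \<in> g} < k"
  shows "\<exists>c. proper E c \<and> (\<forall>f\<in>E. c f < k)"
  using assms
proof (induction E rule: finite_induct)
  case empty
  then show ?case unfolding proper_def by auto
next
  case (insert e F)
  have "card {g \<in> F. z \<in> g} < k" for z
  proof -
    have "card {g \<in> F. z \<in> g} \<le> card {g \<in> insert e F. z \<in> g}"
      using insert.hyps(1) by (intro card_mono) auto
    then show ?thesis using insert.prems(2) by (meson le_less_trans)
  qed
  then obtain c where "proper F c" "\<forall>f\<in>F. c f < k" using insert by auto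
  then show ?case using extend[OF insert.hyps(1) insert.prems(1) insert.hyps(2)] insert.prems(2) by blast
qed

lemma greedy:
  fixes E :: "'b set" and R :: "'b \<Rightarrow> 'b \<Rightarrow> bool" and K :: nat
  assumes "finite E" "\<forall>e\<in>E. \<forall>f\<in>E. R e f \<longrightarrow> R f e" "\<forall>e\<in>E. \<not> R e e"
    "\<forall>e\<in>E. card {f\<in>E. R e f} \<le> K"
  shows "\<exists>c::'b \<Rightarrow> nat. (\<forall>e\<in>E. \<forall>f\<in>E. R e f \<longrightarrow> c e \<noteq> c f) \<and> (\<forall>e\<in>E. c e \<le> K)"
  using assms
proof (induction E rule: finite_induct)
  case empty
  then show ?case by auto
next
  case (insert e F)
  have "\<forall>e'\<in>F. card {f\<in>F. R e' f} \<le> K"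
  proof
    fix e' assume "e' \<in> F"
    have "card {f\<in>F. R e' f} \<le> card {f\<in>insert e F. R e' f}"
      using insert.hyps(1) by (intro card_mono) auto
    moreover have "card {f\<in>insert e F. R e' f} \<le> K" using insert.prems(3) \<open>e' \<in> F\<close> by blast
    ultimately show "card {f\<in>F. R e' f} \<le> K" by linarith
  qed
  moreover have "\<forall>e\<in>F. \<forall>f\<in>F. R e f \<longrightarrow> R f e" using insert.prems(1) by blast
  moreover have "\<forall>e\<in>F. \<not> R e e" using insert.prems(2) by blast
  ultimately obtain c where c: "\<forall>e\<in>F. \<forall>f\<in>F. R e f \<longrightarrow> c e \<noteq> c f" "\<forall>e\<in>F. c e \<le> K"
    using insert.IH by blast
  have fin: "finite {f\<in>F. R e f}" using insert.hyps(1) by simp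
  have "card (c ` {f\<in>F. R e f}) \<le> card {f\<in>F. R e f}" using fin by (rule card_image_le)
  also have "\<dots> \<le> card {f\<in>insert e F. R e f}" using insert.hyps(1) by (intro card_mono) auto
  also have "\<dots> \<le> K" using insert.prems(3) by simp
  finally have "card (c ` {f\<in>F. R e f}) < card {0..K}" by simp
  then have "\<not> {0..K} \<subseteq> c ` {f\<in>F. R e f}"
  proof (intro notI)
    assume "{0..K} \<subseteq> c ` {f\<in>F. R e f}"
    then have "card {0..K} \<le> card (c ` {f\<in>F. R e f})"
      using fin by (intro card_mono) auto
    then show False using \<open>card (c ` {f\<in>F. R e f}) < card {0..K}\<close> by simp
  qed
  then obtain \<gamma> where \<gamma>: "\<gamma> \<in> {0..K}" "\<gamma> \<notin> c ` {f\<in>F. R e f}" by blast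
  define c' where "c' = c(e := \<gamma>)"
  have "\<forall>e1\<in>insert e F. \<forall>e2\<in>insert e F. R e1 e2 \<longrightarrow> c' e1 \<noteq> c' e2"
  proof (intro ballI impI)
    fix e1 e2 assume e1: "e1 \<in> insert e F" and e2: "e2 \<in> insert e F" and r: "R e1 e2"
    show "c' e1 \<noteq> c' e2"
    proof (cases "e1 = e")
      case True
      then have "e2 \<noteq> e" using r insert.prems(2) by auto
      then have "e2 \<in> F" using e2 by auto
      then show ?thesis using True \<gamma> r \<open>e2 \<noteq> e\<close> unfolding c'_def by auto
    next
      case False
      then have "e1 \<in> F" using e1 by auto
      show ?thesis
      proof (cases "e2 = e")
        case True
        then have "R e e1" using insert.prems(1) e1 e2 r by blast
        then show ?thesis using True False \<gamma> \<open>e1 \<in> F\<close> unfolding c'_def by auto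
      next
        case False2: False
        then have "e2 \<in> F" using e2 by auto
        then show ?thesis using c(1) \<open>e1 \<in> F\<close> r False False2 unfolding c'_def by auto
      qed
    qed
  qed
  moreover have "\<forall>e1\<in>insert e F. c' e1 \<le> K" using c(2) \<gamma> unfolding c'_def by auto
  ultimately show ?case by blast
qed

lemma nat_mod_lt:
  assumes "i < (n::nat)"
  shows "nat (a mod int n) < n"
proof -
  have p: "0 < int n" using assms by linarith
  have "a mod int n < int n" using pos_mod_bound[OF p] by simp
  moreover have "0 \<le> a mod int n" using pos_mod_sign[OF p] by simp
  ultimately show ?thesis by linarith
qed

lemma nb_basic:
  assumes "f \<in> L_neighborhood rot L u e"
  shows "f \<in> set (rot u) \<and> f \<noteq> e"
proof -
  obtain i j where ij: "f = rot u ! nat ((int i + j) mod int (length (rot u)))" "i < length (rot u)"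
    "f \<noteq> e" using assms unfolding L_neighborhood_def by blast
  have "nat ((int i + j) mod int (length (rot u))) < length (rot u)" using nat_mod_lt[OF ij(2)] .
  then show ?thesis using ij by auto
qed

lemma nb_sym:
  assumes "f \<in> L_neighborhood rot L u e"
  shows "e \<in> L_neighborhood rot L u f"
proof -
  let ?n = "length (rot u)"
  obtain i j where ij: "f = rot u ! nat ((int i + j) mod int ?n)" "i < ?n" "rot u ! i = e"
    "j \<in> {- int (L div 2) .. int (L div 2)}" "j \<noteq> 0" "f \<noteq> e"
    using assms unfolding L_neighborhood_def by blast
  define i' where "i' = nat ((int i + j) mod int ?n)"
  have np: "int ?n > 0" using ij(2) by linarith
  have ii': "int i' = (int i + j) mod int ?n" unfolding i'_def using np by simp
  have i'l: "i' < ?n" unfolding i'_def using nat_mod_lt[OF ij(2)] .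
  have "(int i' + (- j)) mod int ?n = (int i + j - j) mod int ?n"
    unfolding ii' by (simp add: mod_diff_left_eq)
  also have "\<dots> = int i" using ij(2) by simp
  finally have "nat ((int i' + (- j)) mod int ?n) = i" by simp
  then have "e = rot u ! nat ((int i' + (- j)) mod int ?n)" using ij(3) by simp
  moreover have "rot u ! i' = f" using ij(1) unfolding i'_def by simp
  moreover have "- j \<in> {- int (L div 2) .. int (L div 2)}" "- j \<noteq> 0" using ij(4,5) by auto
  ultimately show ?thesis unfolding L_neighborhood_def using i'l ij(6) by blast
qed

lemma nb_card:
  assumes "distinct (rot u)"
  shows "finite (L_neighborhood rot L u e) \<and> card (L_neighborhood rot L u e) \<le> 2 * (L div 2)"
proof -
  let ?n = "length (rot u)"
  let ?J = "{- int (L div 2) .. int (L div 2)} - {0}"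
  define i0 where "i0 = (SOME i. i < ?n \<and> rot u ! i = e)"
  have sub: "L_neighborhood rot L u e \<subseteq> (\<lambda>j. rot u ! nat ((int i0 + j) mod int ?n)) ` ?J"
  proof
    fix f assume "f \<in> L_neighborhood rot L u e"
    then obtain i j where ij: "f = rot u ! nat ((int i + j) mod int ?n)" "i < ?n" "rot u ! i = e"
      "j \<in> {- int (L div 2) .. int (L div 2)}" "j \<noteq> 0"
      unfolding L_neighborhood_def by blast
    have "i0 < ?n \<and> rot u ! i0 = e" unfolding i0_def by (rule someI[where x = i]) (use ij(2,3) in simp)
    then have "i0 = i" using ij(2,3) nth_eq_iff_index_eq[OF assms, of i0 i] by simp
    then show "f \<in> (\<lambda>j. rot u ! nat ((int i0 + j) mod int ?n)) ` ?J" using ij by auto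
  qed
  have finJ: "finite ?J" by simp
  have "card ?J = 2 * (L div 2)"
  proof -
    have "card {- int (L div 2) .. int (L div 2)} = 2 * (L div 2) + 1" by simp
    moreover have "0 \<in> {- int (L div 2) .. int (L div 2)}" by simp
    ultimately show ?thesis by (simp add: card_Diff_singleton)
  qed
  moreover have "card ((\<lambda>j. rot u ! nat ((int i0 + j) mod int ?n)) ` ?J) \<le> card ?J"
    using finJ by (rule card_image_le)
  moreover have fi: "finite ((\<lambda>j. rot u ! nat ((int i0 + j) mod int ?n)) ` ?J)" using finJ by simp
  moreover have "card (L_neighborhood rot L u e) \<le> card ((\<lambda>j. rot u ! nat ((int i0 + j) mod int ?n)) ` ?J)"
    using fi sub by (rule card_mono)
  moreover have "finite (L_neighborhood rot L u e)" using fi sub by (rule finite_subset[rotated])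
  ultimately show ?thesis by linarith
qed

theorem mainTheorem3:
  fixes V :: "'a set" and E :: "'a set set" and rot :: "'a \<Rightarrow> 'a set list"
    and d L :: nat
  assumes "finite_simple_graph V E"
    and "d = max_degree V E"
    and "rotation_system V E rot"
    and "L \<ge> 2" and "even L"
  shows "\<exists>col :: 'a set \<Rightarrow> nat.
           L_localized_coloring E rot L col \<and>
           card (col ` E) \<le> min d (2 * L) + 1"
proof -
  have finV: "finite V" and EV: "\<forall>e\<in>E. e \<subseteq> V" and G2: "\<forall>f\<in>E. card f = 2"
    using assms(1) unfolding finite_simple_graph_def by auto
  have "E \<subseteq> Pow V" using EV by auto
  moreover have "finite (Pow V)" using finV by simp
  ultimately have finE: "finite E" by (rule finite_subset)
  have rs: "distinct (rot u) \<and> set (rot u) = incident_edges E u" if "u \<in> V" for u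
    using assms(3) that unfolding rotation_system_def by auto
  have degb: "card {g\<in>E. z\<in>g} \<le> d" for z
  proof (cases "z \<in> V")
    case True
    have "degree E z \<in> degree E ` V" using True by simp
    then have "degree E z \<le> Max (degree E ` V)" using finV by (intro Max_ge) auto
    then show ?thesis using assms(2) unfolding max_degree_def degree_def incident_edges_def by simp
  next
    case False
    then have h: "{g\<in>E. z\<in>g} = {}" using EV by auto
    show ?thesis unfolding h by simp
  qed
  have nbE: "f \<in> E \<and> u \<in> f \<and> f \<noteq> e"
    if "e \<in> E" "u \<in> e" "f \<in> L_neighborhood rot L u e" for e u f
  proof -
    have "u \<in> V" using that EV by auto
    then show ?thesis using nb_basic[OF that(3)] rs[of u] unfolding incident_edges_def by auto
  qed
  show ?thesis
  proof (cases "d \<le> 2 * L")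
    case True
    have "\<forall>z. card {g \<in> E. z \<in> g} < d + 1" using degb by (simp add: le_imp_less_Suc)
    then obtain c where c: "proper E c" "\<forall>f\<in>E. c f < d + 1" using vizing[OF finE G2] by blast
    have "L_localized_coloring E rot L c"
      unfolding L_localized_coloring_def
    proof (intro ballI)
      fix e u f assume e: "e \<in> E" and u: "u \<in> e" and f: "f \<in> L_neighborhood rot L u e"
      have "f \<in> E" "u \<in> f" "f \<noteq> e" using nbE[OF e u f] by auto
      moreover have "f \<inter> e \<noteq> {}" using \<open>u \<in> f\<close> u by blast
      ultimately show "c f \<noteq> c e" using c(1) e unfolding proper_def by simp
    qed
    moreover have "card (c ` E) \<le> d + 1"
    proof -
      have "c ` E \<subseteq> {0..<d+1}" using c(2) by auto
      then have "card (c ` E) \<le> card {0..<d+1}" by (intro card_mono) auto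
      then show ?thesis by simp
    qed
    moreover have "min d (2 * L) = d" using True by simp
    ultimately show ?thesis by metis
  next
    case False
    define R where "R e f \<longleftrightarrow> (\<exists>u\<in>e. f \<in> L_neighborhood rot L u e)" for e f
    have sym: "\<forall>e\<in>E. \<forall>f\<in>E. R e f \<longrightarrow> R f e"
    proof (intro ballI impI)
      fix e f assume e: "e \<in> E" and "f \<in> E" and "R e f"
      then obtain u where u: "u \<in> e" "f \<in> L_neighborhood rot L u e" unfolding R_def by blast
      have "u \<in> f" using nbE[OF e u] by auto
      then show "R f e" unfolding R_def using nb_sym[OF u(2)] by blast
    qed
    have irr: "\<forall>e\<in>E. \<not> R e e" unfolding R_def using nb_basic by metis
    have crd: "\<forall>e\<in>E. card {f\<in>E. R e f} \<le> 2 * L"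
    proof
      fix e assume e: "e \<in> E"
      obtain a b where ab: "e = {a, b}" using G2 e by (meson card_2_iff)
      have aV: "a \<in> V" "b \<in> V" using EV e ab by auto
      have ca: "finite (L_neighborhood rot L a e) \<and> card (L_neighborhood rot L a e) \<le> 2 * (L div 2)"
        using nb_card[of rot a L e] rs[OF aV(1)] by simp
      have cb: "finite (L_neighborhood rot L b e) \<and> card (L_neighborhood rot L b e) \<le> 2 * (L div 2)"
        using nb_card[of rot b L e] rs[OF aV(2)] by simp
      have "{f\<in>E. R e f} \<subseteq> L_neighborhood rot L a e \<union> L_neighborhood rot L b e"
        unfolding R_def ab by auto
      then have "card {f\<in>E. R e f} \<le> card (L_neighborhood rot L a e \<union> L_neighborhood rot L b e)"
        using ca cb by (intro card_mono) auto
      also have "\<dots> \<le> card (L_neighborhood rot L a e) + card (L_neighborhood rot L b e)"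
        by (rule card_Un_le)
      also have "\<dots> \<le> 2 * (L div 2) + 2 * (L div 2)" using ca cb by linarith
      also have "\<dots> = 2 * L" using assms(5) by simp
      finally show "card {f\<in>E. R e f} \<le> 2 * L" .
    qed
    obtain c :: "'a set \<Rightarrow> nat" where c: "\<forall>e\<in>E. \<forall>f\<in>E. R e f \<longrightarrow> c e \<noteq> c f" "\<forall>e\<in>E. c e \<le> 2 * L"
      using greedy[OF finE sym irr crd] by blast
    have "L_localized_coloring E rot L c"
      unfolding L_localized_coloring_def
    proof (intro ballI)
      fix e u f assume e: "e \<in> E" and u: "u \<in> e" and f: "f \<in> L_neighborhood rot L u e"
      have "f \<in> E" using nbE[OF e u f] by auto
      moreover have "R e f" unfolding R_def using u f by blast
      ultimately have "c e \<noteq> c f" using c(1) e by simp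
      then show "c f \<noteq> c e" by simp
    qed
    moreover have "card (c ` E) \<le> 2 * L + 1"
    proof -
      have "c ` E \<subseteq> {0..2 * L}" using c(2) by auto
      then have "card (c ` E) \<le> card {0..2 * L}" by (intro card_mono) auto
      then show ?thesis by simp
    qed
    moreover have "min d (2 * L) = 2 * L" using False by simp
    ultimately show ?thesis by metis
  qed
qed

end
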